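(* Let $K\subset\mathbb{T}$ be a Kronecker set with more than one point and let $T\in L(C(K))$ be $Tf(z)=zf(z)$. Then $T$ is not weakly supercyclic, while the set $\{aT^k\mathbf{1}+aT^m\mathbf{1}:a\in[0,\infty),\ k,m\in\mathbb{Z}_+\}$ is norm dense in $C(K)$.
   Context: $\mathbb{T}=\{z\in\mathbb{C}:|z|=1\}$; $C(K)$ is the complex Banach space of continuous functions on $K$ with sup norm; $\mathbf{1}$ is the constant function 1. A non-empty compact $K\subset\mathbb{T}$ is a Kronecker set if $\{u_n|_K:n\in\mathbb{Z}_+\}$, $u_n(z)=z^n$, is dense in $C(K,\mathbb{T})$ for the uniform metric. $T$ is weakly supercyclic if for some $x$ the set $\{zT^nx:z\in\mathbb{C},n\in\mathbb{Z}_+\}$ is weakly dense. *)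

theory Defs
  imports "HOL-Analysis.Analysis"
begin

text \<open>C(K) is modelled as the continuous functions K -> complex, extended by 0 outside K.\<close>
definition CK :: "complex set \<Rightarrow> (complex \<Rightarrow> complex) set" where
  "CK K = {f. continuous_on K f \<and> (\<forall>z. z \<notin> K \<longrightarrow> f z = 0)}"

definition supnorm :: "complex set \<Rightarrow> (complex \<Rightarrow> complex) \<Rightarrow> real" where
  "supnorm K f = Sup ((\<lambda>z. norm (f z)) ` K)"

definition kronecker_set :: "complex set \<Rightarrow> bool" where
  "kronecker_set K \<longleftrightarrow> K \<noteq> {} \<and> compact K \<and> K \<subseteq> sphere 0 1 \<and>
     (\<forall>g. continuous_on K g \<and> g ` K \<subseteq> sphere 0 1 \<longrightarrow>
        (\<forall>e>0. \<exists>n::nat. \<forall>z\<in>K. norm (z ^ n - g z) < e))"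

definition dualCK :: "complex set \<Rightarrow> ((complex \<Rightarrow> complex) \<Rightarrow> complex) set" where
  "dualCK K = {\<phi>. (\<forall>f\<in>CK K. \<forall>g\<in>CK K. \<phi> (\<lambda>z. f z + g z) = \<phi> f + \<phi> g) \<and>
                  (\<forall>c. \<forall>f\<in>CK K. \<phi> (\<lambda>z. c * f z) = c * \<phi> f) \<and>
                  (\<exists>M. \<forall>f\<in>CK K. norm (\<phi> f) \<le> M * supnorm K f)}"

text \<open>Density in the weak topology of C(K): every basic weak neighbourhood of every
  point of C(K) meets S.\<close>
definition weakly_dense :: "complex set \<Rightarrow> (complex \<Rightarrow> complex) set \<Rightarrow> bool" where
  "weakly_dense K S \<longleftrightarrow> S \<subseteq> CK K \<and>
     (\<forall>f\<in>CK K. \<forall>\<Phi>. finite \<Phi> \<and> \<Phi> \<subseteq> dualCK K \<longrightarrow>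
        (\<forall>e>0. \<exists>s\<in>S. \<forall>\<phi>\<in>\<Phi>. norm (\<phi> s - \<phi> f) < e))"

definition weakly_supercyclic ::
  "complex set \<Rightarrow> ((complex \<Rightarrow> complex) \<Rightarrow> (complex \<Rightarrow> complex)) \<Rightarrow> bool" where
  "weakly_supercyclic K T \<longleftrightarrow>
     (\<exists>x\<in>CK K. weakly_dense K {(\<lambda>z. c * (T ^^ n) x z) | c n. True})"

definition mult_op :: "complex set \<Rightarrow> (complex \<Rightarrow> complex) \<Rightarrow> (complex \<Rightarrow> complex)" where
  "mult_op K f = (\<lambda>z. if z \<in> K then z * f z else 0)"

definition one_K :: "complex set \<Rightarrow> complex \<Rightarrow> complex" where
  "one_K K = (\<lambda>z. if z \<in> K then 1 else 0)"

end

theory Submission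
  imports Defs
begin

lemma pow_op: "z \<in> K \<Longrightarrow> (mult_op K ^^ n) h z = z^n * h z"
  by (induction n) (auto simp: mult_op_def)

lemma supnorm_ge:
  assumes "compact K" "h \<in> CK K" "y \<in> K"
  shows "norm (h y) \<le> supnorm K h"
proof -
  have "continuous_on K h" using assms(2) by (simp add: CK_def)
  hence "compact ((\<lambda>z. norm (h z)) ` K)"
    by (intro compact_continuous_image continuous_intros assms(1))
  hence "bdd_above ((\<lambda>z. norm (h z)) ` K)"
    by (simp add: compact_imp_bounded bounded_imp_bdd_above)
  thus ?thesis using assms(3) by (simp add: supnorm_def cSup_upper)
qed

lemma supnorm_le: "K \<noteq> {} \<Longrightarrow> (\<forall>z\<in>K. norm (h z) \<le> c) \<Longrightarrow> supnorm K h \<le> c"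
  unfolding supnorm_def by (intro cSUP_least) auto

lemma decomp:
  assumes "cmod w \<le> 2"
  shows "\<exists>u v. cmod u = 1 \<and> cmod v = 1 \<and> u + v = w"
proof -
  let ?r = "cmod w" let ?t = "Arg w" let ?p = "arccos (?r/2)"
  have "-1 \<le> ?r/2" "?r/2 \<le> 1" using assms norm_ge_zero[of w] by linarith+
  hence c: "cos ?p = ?r/2" by (intro cos_arccos)
  have "cis (?t + ?p) + cis (?t - ?p) = of_real (2 * cos ?p) * cis ?t"
    by (simp add: complex_eq_iff cos_add sin_add cos_diff sin_diff)
  also have "\<dots> = rcis ?r ?t" using c by (simp only: rcis_def) (simp add: mult.commute[of _ 2])
  also have "\<dots> = w" by (rule rcis_cmod_Arg)
  finally show ?thesis by (metis norm_cis)
qed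

lemma exp_near1: "d > 0 \<Longrightarrow> \<exists>r>0. \<forall>u::complex. norm u < r \<longrightarrow> norm (exp u - 1) < d"
proof -
  assume "d > 0"
  have "exp \<midarrow>(0::complex)\<rightarrow> exp 0" using isCont_exp[of 0] by (simp add: isCont_def)
  from LIM_D[OF this \<open>d>0\<close>] obtain s where "s > 0"
    and s: "\<forall>x. x \<noteq> 0 \<and> norm (x - 0) < s \<longrightarrow> norm (exp x - exp (0::complex)) < d" by blast
  show ?thesis
  proof (intro exI[of _ s] conjI allI impI)
    fix u :: complex assume "norm u < s"
    thus "norm (exp u - 1) < d" using s \<open>d>0\<close> by (cases "u = 0") auto
  qed (use \<open>s>0\<close> in auto)
qed

lemma eval_dual:
  assumes "compact K" "y \<in> K"
  shows "(\<lambda>h. h y) \<in> dualCK K"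
  unfolding dualCK_def using supnorm_ge[OF assms(1) _ assms(2)] by (auto intro!: exI[of _ 1])

lemma part1:
  assumes kr: "kronecker_set K" and ab: "a \<in> K" "b \<in> K" "a \<noteq> b"
  shows "\<not> weakly_supercyclic K (mult_op K)"
proof
  assume "weakly_supercyclic K (mult_op K)"
  then obtain x where x: "x \<in> CK K"
    and wd: "weakly_dense K {(\<lambda>z. c * (mult_op K ^^ n) x z) | c n. True}"
    unfolding weakly_supercyclic_def by blast
  have cK: "compact K" and sph: "K \<subseteq> sphere 0 1" using kr by (auto simp: kronecker_set_def)
  have na: "norm a = 1" and nb: "norm b = 1" using sph ab by auto
  define d where "d = cmod (a - b)"
  have d: "d > 0" using ab by (simp add: d_def)
  let ?\<Phi> = "{(\<lambda>h. h a), (\<lambda>h. h b)}"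
  have \<Phi>: "finite ?\<Phi> \<and> ?\<Phi> \<subseteq> dualCK K" using eval_dual[OF cK] ab by auto
  have key: "\<And>f. f \<in> CK K \<Longrightarrow> \<exists>c n. norm (c * a^n * x a - f a) < d/2 \<and> norm (c * b^n * x b - f b) < d/2"
  proof -
    fix f assume "f \<in> CK K"
    have W: "\<And>f \<Phi> e. f \<in> CK K \<Longrightarrow> finite \<Phi> \<and> \<Phi> \<subseteq> dualCK K \<Longrightarrow> e > 0 \<Longrightarrow>
       \<exists>s\<in>{(\<lambda>z. c * (mult_op K ^^ n) x z) | c n. True}. \<forall>\<phi>\<in>\<Phi>. norm (\<phi> s - \<phi> f) < e"
      using wd unfolding weakly_dense_def by blast
    have "d/2 > 0" using d by simp
    from W[OF \<open>f \<in> CK K\<close> \<Phi> this] obtain s where "s \<in> {(\<lambda>z. c * (mult_op K ^^ n) x z) | c n. True}"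
      and s: "\<forall>\<phi>\<in>?\<Phi>. norm (\<phi> s - \<phi> f) < d/2" by blast
    then obtain c n where "s = (\<lambda>z. c * (mult_op K ^^ n) x z)" by blast
    with s ab show "\<exists>c n. norm (c * a^n * x a - f a) < d/2 \<and> norm (c * b^n * x b - f b) < d/2"
      by (auto simp: pow_op mult.assoc)
  qed
  define f1 where "f1 = (\<lambda>z. if z \<in> K then z - a else 0)"
  define f2 where "f2 = (\<lambda>z. if z \<in> K then z - b else 0)"
  have "continuous_on K f1"
    by (rule continuous_on_eq[of K "\<lambda>z. z - a"]) (auto intro: continuous_intros simp: f1_def)
  hence "f1 \<in> CK K" unfolding CK_def by (auto simp: f1_def)
  from key[OF this] obtain c1 n1 where
    1: "norm (c1 * a^n1 * x a) < d/2" "norm (c1 * b^n1 * x b - (b - a)) < d/2"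
    using ab by (auto simp: f1_def)
  have "continuous_on K f2"
    by (rule continuous_on_eq[of K "\<lambda>z. z - b"]) (auto intro: continuous_intros simp: f2_def)
  hence "f2 \<in> CK K" unfolding CK_def by (auto simp: f2_def)
  from key[OF this] obtain c2 n2 where
    2: "norm (c2 * a^n2 * x a - (a - b)) < d/2" "norm (c2 * b^n2 * x b) < d/2"
    using ab by (auto simp: f2_def)
  have nba: "norm (b - a) = d" by (simp add: d_def norm_minus_commute)
  have P1: "norm (c1 * b^n1 * x b) > d/2"
    using 1(2) nba norm_triangle_ineq2[of "b - a" "c1 * b^n1 * x b"]
      norm_minus_commute[of "b - a" "c1 * b^n1 * x b"] by linarith
  have P2: "norm (c2 * a^n2 * x a) > d/2"
    using 2(1) norm_triangle_ineq2[of "a - b" "c2 * a^n2 * x a"]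
      norm_minus_commute[of "a - b" "c2 * a^n2 * x a"] d_def by linarith
  have E1: "norm (c1 * b^n1 * x b) * norm (x a) = norm (c1 * a^n1 * x a) * norm (x b)"
    by (simp add: norm_mult norm_power na nb)
  have E2: "norm (c2 * a^n2 * x a) * norm (x b) = norm (c2 * b^n2 * x b) * norm (x a)"
    by (simp add: norm_mult norm_power na nb)
  have A: "norm (x a) > 0" using P2 d by (auto simp: norm_mult)
  have B: "norm (x b) > 0" using P1 d by (auto simp: norm_mult)
  have "d/2 * norm (x a) < norm (c1 * b^n1 * x b) * norm (x a)"
    using P1 A by (rule mult_strict_right_mono)
  also have "\<dots> = norm (c1 * a^n1 * x a) * norm (x b)" by (rule E1)
  also have "\<dots> < d/2 * norm (x b)" using 1(1) B by (rule mult_strict_right_mono)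
  finally have AB: "norm (x a) < norm (x b)" using d by simp
  have "d/2 * norm (x b) < norm (c2 * a^n2 * x a) * norm (x b)"
    using P2 B by (rule mult_strict_right_mono)
  also have "\<dots> = norm (c2 * b^n2 * x b) * norm (x a)" by (rule E2)
  also have "\<dots> < d/2 * norm (x a)" using 2(2) A by (rule mult_strict_right_mono)
  finally have "norm (x b) < norm (x a)" using d by simp
  with AB show False by simp
qed

lemma part2:
  assumes kr: "kronecker_set K" and f: "f \<in> CK K" and e: "e > 0"
  shows "\<exists>a::real. \<exists>k m::nat. a \<ge> 0 \<and>
       supnorm K (\<lambda>z. of_real a * ((mult_op K ^^ k) (one_K K) z)
                     + of_real a * ((mult_op K ^^ m) (one_K K) z) - f z) < e"
proof -
  have cK: "compact K" and Kne: "K \<noteq> {}" and sph: "K \<subseteq> sphere 0 1"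
    and kp: "\<And>g. continuous_on K g \<Longrightarrow> g ` K \<subseteq> sphere 0 1 \<Longrightarrow>
        (\<forall>e>0. \<exists>n::nat. \<forall>z\<in>K. norm (z ^ n - g z) < e)"
    using kr by (auto simp: kronecker_set_def)
  have fc: "continuous_on K f" using f by (simp add: CK_def)
  have "uniformly_continuous_on K f" by (rule compact_uniformly_continuous[OF fc cK])
  then obtain \<delta> where "\<delta> > 0" and \<delta>: "\<And>x y. x \<in> K \<Longrightarrow> y \<in> K \<Longrightarrow> dist y x < \<delta> \<Longrightarrow> dist (f y) (f x) < e/4"
    unfolding uniformly_continuous_on_def using e by (metis divide_pos_pos zero_less_numeral)
  obtain r where "r > 0" and r: "\<And>u::complex. norm u < r \<Longrightarrow> norm (exp u - 1) < \<delta>/2"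
    using exp_near1[of "\<delta>/2"] \<open>\<delta>>0\<close> by auto
  define \<eta> where "\<eta> = min (1/4) (r/4)"
  have \<eta>: "\<eta> > 0" "\<eta> \<le> 1/4" "2 * \<eta> < r" using \<open>r>0\<close> by (auto simp: \<eta>_def)
  have "continuous_on K cnj" by (intro continuous_intros)
  moreover have "cnj ` K \<subseteq> sphere 0 1" using sph by auto
  ultimately obtain n where n: "\<forall>z\<in>K. norm (z^n - cnj z) < \<eta>" using kp \<eta> by blast
  define N where "N = Suc n"
  have hN: "norm (z^N - 1) < \<eta>" if "z \<in> K" for z
  proof -
    have nz: "norm z = 1" using sph that by auto
    have "z * cnj z = 1" using complex_norm_square[of z] nz by simp
    hence "z^N - 1 = z * (z^n - cnj z)" by (simp add: N_def algebra_simps)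
    hence "norm (z^N - 1) = norm (z^n - cnj z)" by (simp add: norm_mult nz)
    thus ?thesis using n that by simp
  qed
  have nonpos: "z^N \<notin> \<real>\<^sub>\<le>\<^sub>0" if "z \<in> K" for z
  proof
    assume "z^N \<in> \<real>\<^sub>\<le>\<^sub>0"
    hence "norm (z^N - 1) \<ge> 1"
      by (smt (verit) nonpos_Reals_cases norm_of_real of_real_1 of_real_diff)
    thus False using hN[OF that] \<eta> by linarith
  qed
  define L where "L z = Ln (z^N)" for z
  define \<omega> where "\<omega> z = z * exp (- L z / of_nat N)" for z
  have Lb: "norm (L z) \<le> 2 * \<eta>" if "z \<in> K" for z
  proof -
    have "norm (Ln (1 + (z^N - 1))) \<le> 2 * norm (z^N - 1)"
      using hN[OF that] \<eta> by (intro norm_Ln_le) auto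
    thus ?thesis using hN[OF that] by (simp add: L_def)
  qed
  have \<omega>close: "norm (\<omega> z - z) < \<delta>/2" if "z \<in> K" for z
  proof -
    have nz: "norm z = 1" using sph that by auto
    have e1: "norm (- L z / of_nat N) = norm (L z) / real N" by (simp add: norm_divide)
    have "norm (L z) * 1 \<le> norm (L z) * real N" by (intro mult_left_mono) (auto simp: N_def)
    hence "norm (L z) / real N \<le> norm (L z)" by (simp add: divide_le_eq N_def)
    hence "norm (- L z / of_nat N) \<le> norm (L z)" using e1 by simp
    hence "norm (- L z / of_nat N) < r" using Lb[OF that] \<eta> by linarith
    hence "norm (exp (- L z / of_nat N) - 1) < \<delta>/2" by (rule r)
    moreover have "\<omega> z - z = z * (exp (- L z / of_nat N) - 1)" by (simp add: \<omega>_def algebra_simps)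
    ultimately show ?thesis by (simp add: norm_mult nz)
  qed
  have \<omega>root: "\<omega> z ^ N = 1" if "z \<in> K" for z
  proof -
    have nz: "z^N \<noteq> 0" using sph that by auto
    have q1: "exp (- L z / of_nat N) ^ N = exp (of_nat N * (- L z / of_nat N))"
      by (rule exp_of_nat_mult[symmetric])
    have q2: "of_nat N * (- L z / of_nat N) = - L z" by (simp add: N_def del: of_nat_Suc)
    have q3: "exp (- L z) = inverse (z^N)" using nz by (simp add: exp_minus L_def)
    have "exp (- L z / of_nat N) ^ N = inverse (z^N)" using q1 q2 q3 by simp
    thus ?thesis using nz by (simp add: \<omega>_def power_mult_distrib)
  qed
  have fin: "finite (\<omega> ` K)"
    by (rule finite_subset[OF _ finite_roots_unity[of N]]) (use \<omega>root in \<open>auto simp: N_def\<close>)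
  have \<omega>cont: "continuous_on K \<omega>"
  proof -
    have "(of_nat N :: complex) \<noteq> 0" unfolding N_def by (rule of_nat_neq_0)
    thus ?thesis unfolding \<omega>_def L_def using nonpos by (intro continuous_intros) auto
  qed
  define c where "c w = (SOME y. y \<in> K \<and> \<omega> y = w)" for w
  have cp: "c (\<omega> z) \<in> K \<and> \<omega> (c (\<omega> z)) = \<omega> z" if "z \<in> K" for z
    unfolding c_def by (rule someI[of _ z]) (use that in auto)
  obtain z0 where "z0 \<in> K" using Kne by auto
  define a where "a = supnorm K f + 1"
  have fb: "norm (f y) \<le> a - 1" if "y \<in> K" for y
    using supnorm_ge[OF cK f that] by (simp add: a_def)
  have apos: "a > 0" using fb[OF \<open>z0\<in>K\<close>] by (smt (verit) norm_ge_zero)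
  define P where "P w = (SOME p. cmod (fst p) = 1 \<and> cmod (snd p) = 1 \<and> fst p + snd p = f (c w) / of_real a)" for w
  have Pp: "cmod (fst (P (\<omega> z))) = 1 \<and> cmod (snd (P (\<omega> z))) = 1 \<and>
      fst (P (\<omega> z)) + snd (P (\<omega> z)) = f (c (\<omega> z)) / of_real a" if "z \<in> K" for z
  proof -
    have "cmod (f (c (\<omega> z)) / of_real a) \<le> 2"
      using fb[of "c (\<omega> z)"] cp[OF that] apos by (simp add: norm_divide divide_le_eq)
    from decomp[OF this] obtain u v where "cmod u = 1 \<and> cmod v = 1 \<and> u + v = f (c (\<omega> z)) / of_real a"
      by blast
    hence "\<exists>p. cmod (fst p) = 1 \<and> cmod (snd p) = 1 \<and> fst p + snd p = f (c (\<omega> z)) / of_real a"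
      by (intro exI[of _ "(u, v)"]) simp
    thus ?thesis unfolding P_def by (rule someI_ex)
  qed
  define g1 where "g1 z = fst (P (\<omega> z))" for z
  define g2 where "g2 z = snd (P (\<omega> z))" for z
  have "continuous_on K ((\<lambda>w. fst (P w)) \<circ> \<omega>)"
    by (rule continuous_on_compose[OF \<omega>cont continuous_on_finite[OF fin]])
  hence g1c: "continuous_on K g1" by (simp add: g1_def o_def)
  have "continuous_on K ((\<lambda>w. snd (P w)) \<circ> \<omega>)"
    by (rule continuous_on_compose[OF \<omega>cont continuous_on_finite[OF fin]])
  hence g2c: "continuous_on K g2" by (simp add: g2_def o_def)
  have "g1 ` K \<subseteq> sphere 0 1" "g2 ` K \<subseteq> sphere 0 1" using Pp by (auto simp: g1_def g2_def)
  have ep: "e / (8 * a) > 0" using e apos by simp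
  obtain k where k: "\<forall>z\<in>K. norm (z^k - g1 z) < e / (8 * a)"
    using kp[OF g1c \<open>g1 ` K \<subseteq> _\<close>] ep by blast
  obtain m where m: "\<forall>z\<in>K. norm (z^m - g2 z) < e / (8 * a)"
    using kp[OF g2c \<open>g2 ` K \<subseteq> _\<close>] ep by blast
  have bound: "norm (of_real a * ((mult_op K ^^ k) (one_K K) z)
                     + of_real a * ((mult_op K ^^ m) (one_K K) z) - f z) \<le> e/2" if "z \<in> K" for z
  proof -
    have sum: "of_real a * (g1 z + g2 z) = f (c (\<omega> z))"
      using Pp[OF that] apos by (simp add: g1_def g2_def)
    have "dist (c (\<omega> z)) z \<le> norm (c (\<omega> z) - \<omega> (c (\<omega> z))) + norm (\<omega> z - z)"
      using cp[OF that] norm_triangle_ineq[of "c (\<omega> z) - \<omega> z" "\<omega> z - z"]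
      by (simp add: dist_norm)
    also have "\<dots> < \<delta>/2 + \<delta>/2"
      using \<omega>close[OF that] \<omega>close[of "c (\<omega> z)"] cp[OF that]
      by (smt (verit) norm_minus_commute)
    finally have "dist (f (c (\<omega> z))) (f z) < e/4" using \<delta> cp[OF that] that by simp
    hence F: "norm (f (c (\<omega> z)) - f z) < e/4" by (simp add: dist_norm)
    have X: "norm (of_real a * (z^k - g1 z)) \<le> e/8"
    proof -
      have "a * norm (z^k - g1 z) < a * (e / (8 * a))"
        using k that apos by (intro mult_strict_left_mono) auto
      also have "a * (e / (8 * a)) = e/8" using apos by simp
      finally show ?thesis using apos by (simp add: norm_mult)
    qed
    have Y: "norm (of_real a * (z^m - g2 z)) \<le> e/8"
    proof -
      have "a * norm (z^m - g2 z) < a * (e / (8 * a))"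
        using m that apos by (intro mult_strict_left_mono) auto
      also have "a * (e / (8 * a)) = e/8" using apos by simp
      finally show ?thesis using apos by (simp add: norm_mult)
    qed
    have eq: "of_real a * ((mult_op K ^^ k) (one_K K) z) + of_real a * ((mult_op K ^^ m) (one_K K) z) - f z
        = of_real a * (z^k - g1 z) + of_real a * (z^m - g2 z) + (f (c (\<omega> z)) - f z)"
      using sum that by (simp add: pow_op one_K_def algebra_simps)
    show ?thesis unfolding eq
      using X Y F norm_triangle_ineq[of "of_real a * (z^k - g1 z) + of_real a * (z^m - g2 z)" "f (c (\<omega> z)) - f z"]
        norm_triangle_ineq[of "of_real a * (z^k - g1 z)" "of_real a * (z^m - g2 z)"]
      by linarith
  qed
  show ?thesis
    apply (rule exI[of _ a], rule exI[of _ k], rule exI[of _ m])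
    using supnorm_le[OF Kne] bound apos e by (smt (verit) field_sum_of_halves)
qed

theorem mainTheorem14:
  fixes K :: "complex set"
  assumes "kronecker_set K" and "\<exists>a\<in>K. \<exists>b\<in>K. a \<noteq> b"
  shows "\<not> weakly_supercyclic K (mult_op K) \<and>
    (\<forall>f\<in>CK K. \<forall>e>0. \<exists>a::real. \<exists>k m::nat. a \<ge> 0 \<and>
       supnorm K (\<lambda>z. of_real a * ((mult_op K ^^ k) (one_K K) z)
                     + of_real a * ((mult_op K ^^ m) (one_K K) z) - f z) < e)"
  using part1[OF assms(1)] part2[OF assms(1)] assms(2) by blast

end
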